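(* Let $n\ge1$, $1\le k\le n$ and $p\in[0,1]$. Consider the unordered search problem on an array $\vec{x}=(x_1,\ldots,x_n)$ of $n$ distinct elements where the target $z$ is chosen uniformly at random among the entries of $\vec{x}$. Then any deterministic algorithm that runs in $k$ rounds and succeeds with probability at least $p$ (over the choice of $z$) asks at least $np\bigl(1-\frac{k-1}{2k}p\bigr)-1$ queries in expectation (over the choice of $z$). Moreover, there is a deterministic algorithm for this problem running in $k$ rounds, succeeding with probability at least $p$, that asks at most $np\bigl(1-\frac{k-1}{2k}p\bigr)+1$ queries in expectation.
   Context: Comparison model: the algorithm may only ask an oracle queries "How is $a$ compared to $b$?" with $a,b\in\{x_1,\ldots,x_n,z\}$, with answer "$<$", "$=$" or "$>$". The goal is to output the index $\ell$ with $z=x_\ell$. An algorithm runs in $k$ rounds if in each of $k$ rounds it submits a set of queries, chosen depending only on answers from earlier rounds, and then receives all their answers. The query count is the total number of queries asked. *)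

theory Defs
  imports Complex_Main
begin

text \<open>An input is an array x (entries x 1, ..., x n, pairwise distinct, drawn from the
  linear order nat) together with the index l of the target, i.e. z = x l.\<close>

datatype item = X nat | Z

datatype answer = Lt | Eq | Gt

type_synonym query = "item \<times> item"

text \<open>The history after some rounds: for each finished round, the partial map
  sending each asked query to its answer.\<close>
type_synonym history = "(query \<Rightarrow> answer option) list"

fun item_val :: "(nat \<Rightarrow> nat) \<Rightarrow> nat \<Rightarrow> item \<Rightarrow> nat" where
  "item_val x l (X i) = x i"
| "item_val x l Z = x l"

definition cmp_answer :: "(nat \<Rightarrow> nat) \<Rightarrow> nat \<Rightarrow> query \<Rightarrow> answer" where
  "cmp_answer x l q =
     (let a = item_val x l (fst q); b = item_val x l (snd q)
      in if a < b then Lt else if a = b then Eq else Gt)"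

definition valid_items :: "nat \<Rightarrow> item set" where
  "valid_items n = insert Z (X ` {1..n})"

definition valid_queries :: "nat \<Rightarrow> query set" where
  "valid_queries n = valid_items n \<times> valid_items n"

text \<open>A deterministic round-based algorithm is a pair (Q, Out): Q maps the history of
  earlier rounds to the (finite) set of queries of the next round; Out maps the final
  history to the output index.\<close>
definition valid_alg :: "nat \<Rightarrow> (history \<Rightarrow> query set) \<Rightarrow> bool" where
  "valid_alg n Q \<longleftrightarrow> (\<forall>h. Q h \<subseteq> valid_queries n)"

fun run_hist :: "(history \<Rightarrow> query set) \<Rightarrow> (nat \<Rightarrow> nat) \<Rightarrow> nat \<Rightarrow> nat \<Rightarrow> history" where
  "run_hist Q x l 0 = []"
| "run_hist Q x l (Suc r) =
     (let h = run_hist Q x l r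
      in h @ [(\<lambda>q. if q \<in> Q h then Some (cmp_answer x l q) else None)])"

definition num_queries :: "(history \<Rightarrow> query set) \<Rightarrow> (nat \<Rightarrow> nat) \<Rightarrow> nat \<Rightarrow> nat \<Rightarrow> nat" where
  "num_queries Q x l k = (\<Sum>r<k. card (Q (run_hist Q x l r)))"

definition succ_prob ::
  "nat \<Rightarrow> nat \<Rightarrow> (history \<Rightarrow> query set) \<Rightarrow> (history \<Rightarrow> nat) \<Rightarrow> (nat \<Rightarrow> nat) \<Rightarrow> real" where
  "succ_prob n k Q Out x = real (card {l \<in> {1..n}. Out (run_hist Q x l k) = l}) / real n"

definition exp_queries ::
  "nat \<Rightarrow> nat \<Rightarrow> (history \<Rightarrow> query set) \<Rightarrow> (nat \<Rightarrow> nat) \<Rightarrow> real" where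
  "exp_queries n k Q x = (\<Sum>l\<in>{1..n}. real (num_queries Q x l k)) / real n"

end

theory Submission
  imports Defs
begin


lemma run_hist_length[simp]: "length (run_hist Q x l r) = r"
  by (induction r) (auto simp: Let_def)

lemma run_hist_nth:
  "j < r \<Longrightarrow> run_hist Q x l r ! j =
     (\<lambda>q. if q \<in> Q (run_hist Q x l j) then Some (cmp_answer x l q) else None)"
proof (induction r)
  case 0 then show ?case by simp
next
  case (Suc r)
  show ?case
  proof (cases "j < r")
    case True then show ?thesis using Suc by (simp add: Let_def nth_append)
  next
    case False then have "j = r" using Suc by simp
    then show ?thesis by (simp add: Let_def nth_append)
  qed
qed

lemma cmp_Z_X: "cmp_answer x l (Z, X i) = Eq \<longleftrightarrow> x l = x i"
  by (simp add: cmp_answer_def Let_def)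

definition ub_S :: "nat \<Rightarrow> nat \<Rightarrow> nat \<Rightarrow> nat" where "ub_S m k j = j * m div k"
definition ub_grp :: "nat \<Rightarrow> nat \<Rightarrow> nat \<Rightarrow> nat set" where
  "ub_grp m k r = {i. ub_S m k r < i \<and> i \<le> ub_S m k (Suc r) \<and> i \<le> m}"
definition hasEq :: "history \<Rightarrow> bool" where
  "hasEq h \<longleftrightarrow> (\<exists>j<length h. \<exists>q. (h!j) q = Some Eq)"
definition ubQ :: "nat \<Rightarrow> nat \<Rightarrow> history \<Rightarrow> query set" where
  "ubQ m k h = (if hasEq h then {} else (\<lambda>i. (Z, X i)) ` ub_grp m k (length h))"
definition ubOut :: "history \<Rightarrow> nat" where
  "ubOut h = (if \<exists>i. \<exists>j<length h. (h!j) (Z, X i) = Some Eq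
     then (SOME i. \<exists>j<length h. (h!j) (Z, X i) = Some Eq) else 0)"

lemma hasEq_snoc: "hasEq (h @ [f]) \<longleftrightarrow> hasEq h \<or> (\<exists>q. f q = Some Eq)"
proof
  assume "hasEq (h @ [f])"
  then obtain j q where "j < Suc (length h)" "((h @ [f]) ! j) q = Some Eq" by (auto simp: hasEq_def)
  then show "hasEq h \<or> (\<exists>q. f q = Some Eq)"
  proof (cases "j < length h")
    case True
    then have "(h ! j) q = Some Eq" using \<open>((h @ [f]) ! j) q = Some Eq\<close> by (simp add: nth_append)
    then show ?thesis using True unfolding hasEq_def by blast
  next
    case False
    then have "j = length h" using \<open>j < Suc (length h)\<close> by simp
    then have "f q = Some Eq" using \<open>((h @ [f]) ! j) q = Some Eq\<close> by simp
    then show ?thesis by blast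
  qed
next
  assume "hasEq h \<or> (\<exists>q. f q = Some Eq)"
  then show "hasEq (h @ [f])"
  proof
    assume "hasEq h" then show ?thesis by (auto simp: hasEq_def nth_append)
  next
    assume "\<exists>q. f q = Some Eq"
    then obtain q where "f q = Some Eq" by blast
    then have "((h @ [f]) ! length h) q = Some Eq" by simp
    then show ?thesis unfolding hasEq_def by (metis length_append_singleton lessI)
  qed
qed

lemma hasEq_run:
  assumes l: "l \<in> {1..n}" and inj: "inj_on x {1..n}" and mn: "m \<le> n"
  shows "hasEq (run_hist (ubQ m k) x l r) \<longleftrightarrow> (\<exists>j<r. l \<in> ub_grp m k j)"
proof (induction r)
  case 0 then show ?case by (simp add: hasEq_def)
next
  case (Suc r)
  let ?h = "run_hist (ubQ m k) x l r"
  have eq: "(\<exists>q. (if q \<in> ubQ m k ?h then Some (cmp_answer x l q) else None) = Some Eq)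
        \<longleftrightarrow> \<not> hasEq ?h \<and> l \<in> ub_grp m k r"
  proof
    assume "\<exists>q. (if q \<in> ubQ m k ?h then Some (cmp_answer x l q) else None) = Some Eq"
    then obtain q where q: "q \<in> ubQ m k ?h" "cmp_answer x l q = Eq"
      by (auto split: if_splits)
    then have nh: "\<not> hasEq ?h" by (auto simp: ubQ_def split: if_splits)
    then obtain i where i: "q = (Z, X i)" "i \<in> ub_grp m k r" using q by (auto simp: ubQ_def)
    then have "i \<in> {1..n}" using mn by (auto simp: ub_grp_def)
    then have "i = l" using q(2) i(1) inj l by (metis cmp_Z_X inj_on_eq_iff)
    then show "\<not> hasEq ?h \<and> l \<in> ub_grp m k r" using nh i by simp
  next
    assume "\<not> hasEq ?h \<and> l \<in> ub_grp m k r"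
    then show "\<exists>q. (if q \<in> ubQ m k ?h then Some (cmp_answer x l q) else None) = Some Eq"
      by (intro exI[of _ "(Z, X l)"]) (auto simp: ubQ_def cmp_Z_X)
  qed
  have "hasEq (run_hist (ubQ m k) x l (Suc r)) \<longleftrightarrow> hasEq ?h \<or> (\<not> hasEq ?h \<and> l \<in> ub_grp m k r)"
    unfolding run_hist.simps Let_def hasEq_snoc eq ..
  also have "\<dots> \<longleftrightarrow> (\<exists>j<Suc r. l \<in> ub_grp m k j)"
    using Suc.IH by (auto simp: less_Suc_eq)
  finally show ?case .
qed

lemma ub_S_mono: "a \<le> b \<Longrightarrow> ub_S m k a \<le> ub_S m k b"
  unfolding ub_S_def by (simp add: div_le_mono)

lemma ub_S_0[simp]: "ub_S m k 0 = 0" by (simp add: ub_S_def)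

lemma ub_S_k: "1 \<le> k \<Longrightarrow> ub_S m k k = m" by (simp add: ub_S_def)

lemma ub_S_le: "1 \<le> k \<Longrightarrow> j \<le> k \<Longrightarrow> ub_S m k j \<le> m"
  using ub_S_mono[of j k m k] ub_S_k[of k m] by simp

lemma ub_S_ge: "1 \<le> k \<Longrightarrow> k \<le> j \<Longrightarrow> m \<le> ub_S m k j"
  using ub_S_mono[of k j m k] ub_S_k[of k m] by simp

lemma ub_grp_lt: "1 \<le> k \<Longrightarrow> r < k \<Longrightarrow> ub_grp m k r = {ub_S m k r<..ub_S m k (Suc r)}"
  using ub_S_le[of k "Suc r" m] by (auto simp: ub_grp_def)

lemma ub_grp_ge: "1 \<le> k \<Longrightarrow> k \<le> r \<Longrightarrow> ub_grp m k r = {}"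
  using ub_S_ge[of k r m] by (auto simp: ub_grp_def)

lemma ub_grp_disj: "l \<in> ub_grp m k a \<Longrightarrow> l \<in> ub_grp m k b \<Longrightarrow> a = b"
proof (rule ccontr)
  assume A: "l \<in> ub_grp m k a" "l \<in> ub_grp m k b" "a \<noteq> b"
  show False
  proof (cases "a < b")
    case True
    then have "ub_S m k (Suc a) \<le> ub_S m k b" by (simp add: ub_S_mono)
    then show False using A by (auto simp: ub_grp_def)
  next
    case False
    then have "ub_S m k (Suc b) \<le> ub_S m k a" using A(3) by (simp add: ub_S_mono)
    then show False using A by (auto simp: ub_grp_def)
  qed
qed

lemma card_ub_grp: "1 \<le> k \<Longrightarrow> r < k \<Longrightarrow> card (ub_grp m k r) = ub_S m k (Suc r) - ub_S m k r"
  by (simp add: ub_grp_lt)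

lemma card_ubQ_img: "card ((\<lambda>i. (Z, X i)) ` A) = card A"
  by (rule card_image) (auto simp: inj_on_def)

lemma ubQ_valid: "1 \<le> k \<Longrightarrow> m \<le> n \<Longrightarrow> valid_alg n (ubQ m k)"
  by (auto simp: valid_alg_def ubQ_def ub_grp_def valid_queries_def valid_items_def)

lemma sum_grp_telescope: "1 \<le> k \<Longrightarrow> K \<le> k \<Longrightarrow> (\<Sum>r<K. card (ub_grp m k r)) = ub_S m k K"
proof (induction K)
  case 0 then show ?case by simp
next
  case (Suc K)
  then have "ub_S m k K \<le> ub_S m k (Suc K)" by (simp add: ub_S_mono)
  then show ?case using Suc by (simp add: card_ub_grp)
qed

lemma num_in_grp:
  assumes l: "l \<in> {1..n}" and inj: "inj_on x {1..n}" and mn: "m \<le> n" and k: "1 \<le> k"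
    and K: "K < k" and lK: "l \<in> ub_grp m k K"
  shows "num_queries (ubQ m k) x l k = ub_S m k (Suc K)"
proof -
  have trm: "card (ubQ m k (run_hist (ubQ m k) x l r)) = (if K < r then 0 else card (ub_grp m k r))" for r
  proof -
    have "hasEq (run_hist (ubQ m k) x l r) \<longleftrightarrow> K < r"
      using hasEq_run[OF l inj mn] lK ub_grp_disj by blast
    then show ?thesis by (simp add: ubQ_def card_ubQ_img)
  qed
  have "num_queries (ubQ m k) x l k = (\<Sum>r<k. if K < r then 0 else card (ub_grp m k r))"
    unfolding num_queries_def trm ..
  also have "\<dots> = (\<Sum>r\<in>{..<Suc K}. card (ub_grp m k r))"
    using K by (intro sum.mono_neutral_cong_right) auto
  also have "\<dots> = ub_S m k (Suc K)" using K k by (intro sum_grp_telescope) auto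
  finally show ?thesis .
qed

lemma num_out_grp:
  assumes l: "l \<in> {1..n}" and inj: "inj_on x {1..n}" and mn: "m \<le> n" and k: "1 \<le> k"
    and lm: "m < l"
  shows "num_queries (ubQ m k) x l k = m"
proof -
  have nl: "l \<notin> ub_grp m k j" for j using lm by (auto simp: ub_grp_def)
  have trm: "card (ubQ m k (run_hist (ubQ m k) x l r)) = card (ub_grp m k r)" for r
  proof -
    have "\<not> hasEq (run_hist (ubQ m k) x l r)"
      using hasEq_run[OF l inj mn] nl by blast
    then show ?thesis by (simp add: ubQ_def card_ubQ_img)
  qed
  show ?thesis unfolding num_queries_def trm using sum_grp_telescope[OF k order_refl] ub_S_k[OF k] by simp
qed

lemma ub_real:
  fixes n k m u T P c :: real
  assumes k: "k \<ge> 1" and n: "n \<ge> 1" and P0: "0 \<le> P" and Pm: "P \<le> m" and mP: "m < P + 1"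
    and mn: "m \<le> n" and m01: "m = 0 \<or> m \<ge> 1" and ku: "k * u \<le> m + k - 1" and u0: "u \<ge> 0"
    and T: "2 * T \<le> m * m + u * m + 2 * ((n - m) * m)"
    and c: "c = (k - 1) / (2 * k)"
  shows "T \<le> n * P - c * P * P + n"
proof (cases "m = 0")
  case True
  then have "P = 0" using P0 Pm by simp
  then show ?thesis using T True n by simp
next
  case False
  then have m1: "m \<ge> 1" using m01 by simp
  have c0: "0 \<le> c" "c \<le> 1/2" using k by (auto simp: c field_simps)
  have "u \<le> (m + k - 1) / k" using ku k by (simp add: field_simps)
  then have "u * m \<le> (m + k - 1) / k * m" using m1 by (intro mult_right_mono) auto
  also have "\<dots> = m * m + m - 2 * c * m * m + 2 * c * m - m" using k by (simp add: c field_simps)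
  finally have um: "u * m \<le> m * m - 2 * c * m * m + 2 * c * m" by simp
  have "m * m + u * m + 2 * ((n - m) * m) \<le> 2 * (n * m - c * m * m + c * m)"
    using um by (simp add: algebra_simps)
  then have "2 * T \<le> 2 * (n * m - c * m * m + c * m)" by (rule order_trans[OF T])
  then have T2: "T \<le> n * m - c * m * m + c * m" by simp
  define d where "d = m - P"
  have d0: "0 \<le> d" "d < 1" using Pm mP by (auto simp: d_def)
  have cdd: "0 \<le> c * d * d" using c0 d0 by simp
  have "(c * d * d) * 1 \<le> (c * d * d) * m" using m1 cdd by (rule mult_left_mono)
  then have "c * d * d \<le> c * m * d * d" by (simp add: ac_simps)
  have "c * m \<le> 1 * m" using c0 m1 by (intro mult_right_mono) auto
  then have cm: "c * m \<le> n" using mn by simp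
  have "c * m * (1 - d) * (1 - d) \<le> n * (1 - d) * (1 - d)"
    using cm d0 by (simp add: mult_right_mono)
  also have "\<dots> \<le> n * (1 - d)" using d0 n by (simp add: mult_left_le)
  finally have key: "c * m * (1 - d) * (1 - d) \<le> n * (1 - d)" .
  have "n * m - c * m * m + c * m - (n * P - c * P * P + n)
      = c * m - 2 * c * m * d + c * d * d - n * (1 - d)"
    by (simp add: d_def algebra_simps)
  also have "\<dots> \<le> c * m * (1 - d) * (1 - d) - n * (1 - d)"
    using \<open>c * d * d \<le> c * m * d * d\<close> by (simp add: algebra_simps)
  also have "\<dots> \<le> 0" using key by simp
  finally show ?thesis using T2 by simp
qed

lemma div_add_le: "(a + m) div k \<le> a div k + (m + k - 1) div (k::nat)"
proof (cases "k = 0")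
  case True then show ?thesis by simp
next
  case False
  have e: "a + m = (a mod k + m) + k * (a div k)" by simp
  have "(a mod k + m + k * (a div k)) div k = a div k + (a mod k + m) div k"
    by (rule div_mult_self2[OF False])
  then have "(a + m) div k = a div k + (a mod k + m) div k"
    by (simp only: e[symmetric])
  then have "(a + m) div k = (a mod k + m) div k + a div k" by linarith
  moreover have "a mod k < k" using False by simp
  then have "a mod k + m \<le> m + k - 1" by linarith
  then have "(a mod k + m) div k \<le> (m + k - 1) div k" by (rule div_le_mono)
  ultimately show ?thesis by simp
qed

lemma ub_s_le: "ub_S m k (Suc g) - ub_S m k g \<le> (m + k - 1) div k"
proof -
  have "ub_S m k (Suc g) = (g * m + m) div k" by (simp add: ub_S_def add.commute)
  also have "\<dots> \<le> g * m div k + (m + k - 1) div k" by (rule div_add_le)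
  finally show ?thesis by (simp add: ub_S_def)
qed

lemma sum_sq_bound:
  "2 * (\<Sum>g<K. (ub_S m k (Suc g) - ub_S m k g) * ub_S m k (Suc g))
     \<le> ub_S m k K * ub_S m k K + ((m + k - 1) div k) * ub_S m k K"
proof (induction K)
  case 0 then show ?case by simp
next
  case (Suc K)
  define a where "a = ub_S m k K"
  define s where "s = ub_S m k (Suc K) - ub_S m k K"
  define u where "u = (m + k - 1) div k"
  have b: "ub_S m k (Suc K) = a + s" using ub_S_mono[of K "Suc K" m k] by (simp add: a_def s_def)
  have su: "s \<le> u" unfolding s_def u_def by (rule ub_s_le)
  have ss: "s * s \<le> u * s" using su by (rule mult_right_mono) simp
  have IH: "2 * (\<Sum>g<K. (ub_S m k (Suc g) - ub_S m k g) * ub_S m k (Suc g)) \<le> a * a + u * a"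
    using Suc.IH by (simp add: a_def u_def)
  have "2 * (\<Sum>g<Suc K. (ub_S m k (Suc g) - ub_S m k g) * ub_S m k (Suc g))
      = 2 * (\<Sum>g<K. (ub_S m k (Suc g) - ub_S m k g) * ub_S m k (Suc g)) + 2 * (s * (a + s))"
    using b by (simp add: s_def)
  also have "\<dots> \<le> a * a + u * a + 2 * (s * (a + s))" using IH by simp
  also have "\<dots> \<le> (a + s) * (a + s) + u * (a + s)" using ss by (simp add: algebra_simps)
  finally show ?case using b by (simp add: u_def)
qed

lemma sum_in_grps:
  assumes inj: "inj_on x {1..n}" and mn: "m \<le> n" and k: "1 \<le> k"
  shows "K \<le> k \<Longrightarrow> (\<Sum>l\<in>{1..ub_S m k K}. num_queries (ubQ m k) x l k)
           = (\<Sum>g<K. (ub_S m k (Suc g) - ub_S m k g) * ub_S m k (Suc g))"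
proof (induction K)
  case 0 then show ?case by simp
next
  case (Suc K)
  have le: "ub_S m k K \<le> ub_S m k (Suc K)" by (simp add: ub_S_mono)
  have Sm: "ub_S m k (Suc K) \<le> m" using Suc.prems k by (intro ub_S_le) auto
  have split: "{1..ub_S m k (Suc K)} = {1..ub_S m k K} \<union> {ub_S m k K<..ub_S m k (Suc K)}"
    using le by auto
  have "(\<Sum>l\<in>{ub_S m k K<..ub_S m k (Suc K)}. num_queries (ubQ m k) x l k)
      = (\<Sum>l\<in>{ub_S m k K<..ub_S m k (Suc K)}. ub_S m k (Suc K))"
  proof (rule sum.cong[OF refl])
    fix l assume l: "l \<in> {ub_S m k K<..ub_S m k (Suc K)}"
    have "l \<in> ub_grp m k K" using l Suc.prems k by (simp add: ub_grp_lt)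
    moreover have "l \<in> {1..n}" using l Sm mn by auto
    ultimately show "num_queries (ubQ m k) x l k = ub_S m k (Suc K)"
      using num_in_grp[OF _ inj mn k] Suc.prems by simp
  qed
  then have "(\<Sum>l\<in>{ub_S m k K<..ub_S m k (Suc K)}. num_queries (ubQ m k) x l k)
      = (ub_S m k (Suc K) - ub_S m k K) * ub_S m k (Suc K)" by simp
  moreover have "(\<Sum>l\<in>{1..ub_S m k (Suc K)}. num_queries (ubQ m k) x l k)
      = (\<Sum>l\<in>{1..ub_S m k K}. num_queries (ubQ m k) x l k)
        + (\<Sum>l\<in>{ub_S m k K<..ub_S m k (Suc K)}. num_queries (ubQ m k) x l k)"
    unfolding split by (rule sum.union_disjoint) auto
  ultimately show ?case using Suc by simp
qed

lemma sum_all: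
  assumes inj: "inj_on x {1..n}" and mn: "m \<le> n" and k: "1 \<le> k"
  shows "(\<Sum>l\<in>{1..n}. num_queries (ubQ m k) x l k)
           = (\<Sum>g<k. (ub_S m k (Suc g) - ub_S m k g) * ub_S m k (Suc g)) + (n - m) * m"
proof -
  have split: "{1..n} = {1..m} \<union> {m<..n}" using mn by auto
  have "(\<Sum>l\<in>{1..n}. num_queries (ubQ m k) x l k)
      = (\<Sum>l\<in>{1..m}. num_queries (ubQ m k) x l k) + (\<Sum>l\<in>{m<..n}. num_queries (ubQ m k) x l k)"
    unfolding split by (rule sum.union_disjoint) auto
  also have "(\<Sum>l\<in>{1..m}. num_queries (ubQ m k) x l k)
      = (\<Sum>g<k. (ub_S m k (Suc g) - ub_S m k g) * ub_S m k (Suc g))"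
    using sum_in_grps[OF inj mn k order_refl] ub_S_k[OF k] by simp
  also have "(\<Sum>l\<in>{m<..n}. num_queries (ubQ m k) x l k) = (\<Sum>l\<in>{m<..n}. m)"
    by (rule sum.cong[OF refl]) (rule num_out_grp[OF _ inj mn k], auto)
  finally show ?thesis by simp
qed

lemma ub_out:
  assumes l: "l \<in> {1..n}" and inj: "inj_on x {1..n}" and mn: "m \<le> n" and k: "1 \<le> k"
    and lm: "l \<le> m"
  shows "ubOut (run_hist (ubQ m k) x l k) = l"
proof -
  let ?h = "run_hist (ubQ m k) x l k"
  obtain K where K: "K < k" "l \<in> ub_grp m k K"
  proof -
    have "\<exists>K<k. ub_S m k K < l \<and> l \<le> ub_S m k (Suc K)"
    proof (rule ccontr)
      assume "\<not> ?thesis"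
      then have "\<forall>K<k. ub_S m k K < l \<longrightarrow> ub_S m k (Suc K) < l" by (auto simp: not_le)
      then have "K \<le> k \<Longrightarrow> ub_S m k K < l" for K
        using l by (induction K) auto
      then show False using ub_S_k[OF k] lm by (metis order_refl not_le)
    qed
    then show ?thesis using that lm by (auto simp: ub_grp_def)
  qed
  have nh: "\<not> hasEq (run_hist (ubQ m k) x l K)"
    using hasEq_run[OF l inj mn] K ub_grp_disj by blast
  have hK: "(?h ! K) (Z, X l) = Some Eq"
    using K nh by (simp add: run_hist_nth ubQ_def cmp_Z_X)
  have uniq: "i = l" if "j < length ?h" "(?h ! j) (Z, X i) = Some Eq" for i j
  proof -
    have j: "j < k" using that by simp
    then have q: "(Z, X i) \<in> ubQ m k (run_hist (ubQ m k) x l j)" "x l = x i"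
      using that by (auto simp: run_hist_nth cmp_Z_X split: if_splits)
    then have "i \<in> ub_grp m k j" by (auto simp: ubQ_def split: if_splits)
    then have "i \<in> {1..n}" using mn by (auto simp: ub_grp_def)
    then show ?thesis using q inj l by (metis inj_on_eq_iff)
  qed
  have ex: "\<exists>i. \<exists>j<length ?h. (?h ! j) (Z, X i) = Some Eq" using hK K by auto
  show ?thesis unfolding ubOut_def using ex
    by (simp only: if_True) (rule someI2_ex, auto intro: uniq)
qed

lemma upper_part:
  fixes n k :: nat and p :: real
  assumes n: "n \<ge> 1" and k: "1 \<le> k" and p0: "0 \<le> p" and p1: "p \<le> 1"
  shows "\<exists>Q Out. valid_alg n Q \<and>
            (\<forall>x. inj_on x {1..n} \<longrightarrow>
                 succ_prob n k Q Out x \<ge> p \<and>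
                 exp_queries n k Q x \<le> real n * p * (1 - (real k - 1) / (2 * real k) * p) + 1)"
proof -
  define m where "m = nat \<lceil>real n * p\<rceil>"
  have np: "real n * p \<le> real n" using p1 n by (simp add: mult_left_le)
  have np0: "0 \<le> real n * p" using p0 by simp
  have mn: "m \<le> n" unfolding m_def using np
    by (metis ceiling_le_iff nat_le_iff of_int_of_nat_eq)
  have mge: "real n * p \<le> real m" unfolding m_def using np0 by linarith
  have mlt: "real m < real n * p + 1" unfolding m_def using np0 by linarith
  show ?thesis
  proof (intro exI[of _ "ubQ m k"] exI[of _ ubOut] conjI allI impI)
    show "valid_alg n (ubQ m k)" using k mn by (rule ubQ_valid)
  next
    fix x :: "nat \<Rightarrow> nat" assume inj: "inj_on x {1..n}"
    have sub: "{1..m} \<subseteq> {l \<in> {1..n}. ubOut (run_hist (ubQ m k) x l k) = l}"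
      using ub_out[OF _ inj mn k] mn by auto
    have "m \<le> card {l \<in> {1..n}. ubOut (run_hist (ubQ m k) x l k) = l}"
      using card_mono[OF _ sub] by simp
    then have "real n * p \<le> real (card {l \<in> {1..n}. ubOut (run_hist (ubQ m k) x l k) = l})"
      using mge by linarith
    then show "p \<le> succ_prob n k (ubQ m k) ubOut x"
      unfolding succ_prob_def using n by (simp add: field_simps)
  next
    fix x :: "nat \<Rightarrow> nat" assume inj: "inj_on x {1..n}"
    define T where "T = (\<Sum>l\<in>{1..n}. num_queries (ubQ m k) x l k)"
    define u where "u = (m + k - 1) div k"
    have "2 * T \<le> m * m + u * m + 2 * ((n - m) * m)"
      unfolding T_def sum_all[OF inj mn k] u_def
      using sum_sq_bound[where K=k and m=m and k=k] ub_S_k[OF k, of m] by simp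
    then have "real (2 * T) \<le> real (m * m + u * m + 2 * ((n - m) * m))"
      by (rule of_nat_mono)
    then have T2: "2 * real T \<le> real m * real m + real u * real m + 2 * ((real n - real m) * real m)"
      using mn by (simp add: of_nat_diff)
    have ku: "k * u \<le> m + k - 1" unfolding u_def by (rule times_div_less_eq_dividend)
    then have "real (k * u) \<le> real (m + k - 1)" by (rule of_nat_mono)
    then have ku': "real k * real u \<le> real m + real k - 1" using k
      by (simp add: of_nat_diff)
    have m01: "real m = 0 \<or> real m \<ge> 1" by auto
    have main: "real T \<le> real n * (real n * p) - ((real k - 1) / (2 * real k)) * (real n * p) * (real n * p) + real n"
      by (rule ub_real[where m = "real m" and u = "real u", OF _ _ _ mge mlt _ m01 ku' _ T2]) (use k n np0 mn in auto)
    have "exp_queries n k (ubQ m k) x = real T / real n"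
      by (simp add: exp_queries_def T_def)
    also have "\<dots> \<le> (real n * (real n * p) - ((real k - 1) / (2 * real k)) * (real n * p) * (real n * p) + real n) / real n"
      using main n by (simp add: divide_right_mono)
    also have "\<dots> = real n * p * (1 - (real k - 1) / (2 * real k) * p) + 1"
      using n by (simp add: field_simps)
    finally show "exp_queries n k (ubQ m k) x \<le> real n * p * (1 - (real k - 1) / (2 * real k) * p) + 1" .
  qed
qed



definition vals :: "nat \<Rightarrow> nat \<Rightarrow> (nat \<Rightarrow> nat option) \<Rightarrow> nat \<Rightarrow> nat" where
  "vals n k lv i = (case lv i of Some r \<Rightarrow> r | None \<Rightarrow> Suc k) * Suc n + i"
definition zval :: "nat \<Rightarrow> nat \<Rightarrow> nat" where "zval n k = Suc (Suc k) * Suc n"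
definition ztouch :: "(history \<Rightarrow> query set) \<Rightarrow> history \<Rightarrow> nat \<Rightarrow> bool" where
  "ztouch Q h b \<longleftrightarrow> (Z, X b) \<in> Q h \<or> (X b, Z) \<in> Q h"
definition xxq :: "(history \<Rightarrow> query set) \<Rightarrow> history \<Rightarrow> nat \<Rightarrow> nat \<Rightarrow> bool" where
  "xxq Q h a c \<longleftrightarrow> (X a, X c) \<in> Q h \<or> (X c, X a) \<in> Q h"
definition edges :: "(history \<Rightarrow> query set) \<Rightarrow> history \<Rightarrow> (nat \<Rightarrow> nat option) \<Rightarrow> (nat \<times> nat) set" where
  "edges Q h lv = {(a, c). a < c \<and> lv a = None \<and> lv c = None \<and> (\<exists>j\<le>length h. xxq Q (take j h) a c)}"
definition leavers :: "(history \<Rightarrow> query set) \<Rightarrow> history \<Rightarrow> (nat \<Rightarrow> nat option) \<Rightarrow> nat set" where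
  "leavers Q h lv = {a. lv a = None \<and> (\<exists>b. (a, b) \<in> (edges Q h lv)\<^sup>* \<and> lv b = None \<and> ztouch Q h b)}"
definition step_hist :: "(history \<Rightarrow> query set) \<Rightarrow> nat \<Rightarrow> nat \<Rightarrow> history \<Rightarrow> (nat \<Rightarrow> nat option) \<Rightarrow> history" where
  "step_hist Q n k h lv = h @ [\<lambda>q. if q \<in> Q h then Some (cmp_answer ((vals n k lv)(0 := zval n k)) 0 q) else None]"
definition step_lv :: "(history \<Rightarrow> query set) \<Rightarrow> history \<Rightarrow> (nat \<Rightarrow> nat option) \<Rightarrow> nat \<Rightarrow> nat \<Rightarrow> nat option" where
  "step_lv Q h lv r = (\<lambda>i. if lv i = None \<and> i \<in> leavers Q h lv then Some r else lv i)"

fun adv :: "nat \<Rightarrow> nat \<Rightarrow> (history \<Rightarrow> query set) \<Rightarrow> nat \<Rightarrow> history \<times> (nat \<Rightarrow> nat option)" where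
  "adv n k Q 0 = ([], \<lambda>i. None)"
| "adv n k Q (Suc r) = (case adv n k Q r of (h, lv) \<Rightarrow> (step_hist Q n k h lv, step_lv Q h lv r))"

definition mh where "mh n k Q r = fst (adv n k Q r)"
definition lvs where "lvs n k Q r = snd (adv n k Q r)"

lemma mh_0[simp]: "mh n k Q 0 = []" by (simp add: mh_def)
lemma lvs_0[simp]: "lvs n k Q 0 = (\<lambda>i. None)" by (simp add: lvs_def)
lemma mh_Suc: "mh n k Q (Suc r) = step_hist Q n k (mh n k Q r) (lvs n k Q r)"
  by (simp add: mh_def lvs_def split: prod.split)
lemma lvs_Suc: "lvs n k Q (Suc r) = step_lv Q (mh n k Q r) (lvs n k Q r) r"
  by (simp add: mh_def lvs_def split: prod.split)

lemma mh_length[simp]: "length (mh n k Q r) = r"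
  by (induction r) (simp_all add: mh_Suc step_hist_def)

lemma mh_take: "j \<le> r \<Longrightarrow> take j (mh n k Q r) = mh n k Q j"
proof (induction r)
  case 0 then show ?case by simp
next
  case (Suc r)
  show ?case
  proof (cases "j = Suc r")
    case True then show ?thesis by simp
  next
    case False
    then have "j \<le> r" using Suc.prems by simp
    then show ?thesis using Suc.IH by (simp add: mh_Suc step_hist_def)
  qed
qed

lemma lvs_Suc_None: "lvs n k Q (Suc r) i = None \<Longrightarrow> lvs n k Q r i = None"
  by (auto simp: lvs_Suc step_lv_def split: if_splits)

lemma lvs_Suc_Some: "lvs n k Q r i = Some j \<Longrightarrow> lvs n k Q (Suc r) i = Some j"
  by (auto simp: lvs_Suc step_lv_def)

lemma lvs_mono: assumes "lvs n k Q r i = Some j" and "r \<le> r'" shows "lvs n k Q r' i = Some j"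
  using assms(2) by (induction r' rule: dec_induct) (auto intro: lvs_Suc_Some simp: assms(1))

lemma lvs_new: "lvs n k Q r i = None \<Longrightarrow> lvs n k Q (Suc r) i \<noteq> None \<Longrightarrow>
    lvs n k Q (Suc r) i = Some r \<and> i \<in> leavers Q (mh n k Q r) (lvs n k Q r)"
  by (auto simp: lvs_Suc step_lv_def split: if_splits)

lemma lvs_char: "lvs n k Q r i = Some j \<Longrightarrow> j < r \<and> lvs n k Q j i = None \<and> lvs n k Q (Suc j) i = Some j"
proof (induction r)
  case 0 then show ?case by simp
next
  case (Suc r)
  show ?case
  proof (cases "lvs n k Q r i")
    case None
    then have "lvs n k Q (Suc r) i = Some r" using lvs_new[OF None] Suc.prems by simp
    then show ?thesis using Suc.prems None by simp
  next
    case (Some j')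
    then have "lvs n k Q (Suc r) i = Some j'" by (rule lvs_Suc_Some)
    then have "j' = j" using Suc.prems by simp
    then show ?thesis using Suc.IH Some by simp
  qed
qed

lemma lvs_None_le: "lvs n k Q r i = None \<Longrightarrow> r' \<le> r \<Longrightarrow> lvs n k Q r' i = None"
  by (metis lvs_mono option.exhaust option.simps(3))

definition xf :: "nat \<Rightarrow> nat \<Rightarrow> (history \<Rightarrow> query set) \<Rightarrow> nat \<Rightarrow> nat" where
  "xf n k Q = vals n k (lvs n k Q k)"

lemma lin_lt: "j < r \<Longrightarrow> i \<le> n \<Longrightarrow> j * Suc n + i < r * Suc n"
proof -
  assume a: "j < r" "i \<le> n"
  have "Suc j * Suc n \<le> r * Suc n" using a(1) by (intro mult_le_mono1) simp
  then show ?thesis using a(2) by simp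
qed

lemma lin_le: "j \<le> r \<Longrightarrow> j * Suc n + i \<le> r * Suc n + i"
proof -
  assume "j \<le> r"
  then have "j * Suc n \<le> r * Suc n" by (rule mult_le_mono1)
  then show ?thesis by (rule add_right_mono)
qed

lemma X_valid_item: "X b \<in> valid_items n \<longleftrightarrow> b \<in> {1..n}"
  by (auto simp: valid_items_def)

lemma cmp_answer_cong:
  assumes "item_val x l u < item_val x l w \<longleftrightarrow> item_val y m u < item_val y m w"
    and "item_val x l u = item_val x l w \<longleftrightarrow> item_val y m u = item_val y m w"
  shows "cmp_answer x l (u, w) = cmp_answer y m (u, w)"
  using assms by (simp add: cmp_answer_def Let_def)

context
  fixes n k :: nat and Q :: "history \<Rightarrow> query set"
  assumes valid: "valid_alg n Q"
begin

abbreviation "M \<equiv> mh n k Q"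
abbreviation "L \<equiv> lvs n k Q"
abbreviation "F \<equiv> xf n k Q"

lemma xf_left: "L r i = Some j \<Longrightarrow> r \<le> k \<Longrightarrow> F i = j * Suc n + i"
  using lvs_mono[of n k Q r i j k] by (simp add: xf_def vals_def)

lemma xf_class: assumes "L r i = None" "r \<le> k" shows "r * Suc n + i \<le> F i"
proof (cases "L k i")
  case None then show ?thesis using assms lin_le[of r "Suc k" n i] by (simp add: xf_def vals_def)
next
  case (Some j)
  from lvs_char[OF Some] have j: "j < k" "L (Suc j) i = Some j" by auto
  have "r \<le> j"
  proof (rule ccontr)
    assume "\<not> r \<le> j"
    then have "L r i = Some j" using lvs_mono[OF j(2)] by simp
    then show False using assms by simp
  qed
  then show ?thesis using Some lin_le[of r j n i] by (simp add: xf_def vals_def)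
qed

lemma xf_le: "F i \<le> Suc k * Suc n + i"
proof (cases "L k i")
  case None then show ?thesis by (simp add: xf_def vals_def)
next
  case (Some j)
  then have "j < k" using lvs_char by blast
  then show ?thesis using Some lin_le[of j "Suc k" n i] by (simp add: xf_def vals_def)
qed

lemma vals_lt_zval: "i \<le> n \<Longrightarrow> r \<le> k \<Longrightarrow> vals n k (L r) i < zval n k"
proof (cases "L r i")
  case None
  assume "i \<le> n" then show ?thesis using None lin_lt[of "Suc k" "Suc (Suc k)" i n] by (simp add: vals_def zval_def)
next
  case (Some j)
  assume "i \<le> n" "r \<le> k"
  moreover have "j < r" using lvs_char[OF Some] by simp
  ultimately have "j * Suc n + i < Suc (Suc k) * Suc n" by (intro lin_lt) auto
  then show ?thesis using Some by (simp add: vals_def zval_def)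
qed

lemma q_valid: "(u, w) \<in> Q h \<Longrightarrow> u \<in> valid_items n \<and> w \<in> valid_items n"
  using valid by (auto simp: valid_alg_def valid_queries_def)

lemma ztouch_valid: assumes "ztouch Q h b" shows "b \<in> {1..n}"
proof -
  have "X b \<in> valid_items n" using assms q_valid unfolding ztouch_def by blast
  then show ?thesis by (simp only: X_valid_item)
qed

lemma xxq_valid: assumes "xxq Q h a b" shows "a \<in> {1..n} \<and> b \<in> {1..n}"
proof -
  have "X a \<in> valid_items n \<and> X b \<in> valid_items n" using assms q_valid unfolding xxq_def by blast
  then show ?thesis by (simp only: X_valid_item)
qed

lemma z_lt: assumes r: "r < k" and zt: "ztouch Q (M r) b" and l: "L (Suc r) l = None"
  shows "F b < F l"
proof -
  have b: "b \<le> n" using ztouch_valid[OF zt] by simp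
  have Fl: "Suc r * Suc n + l \<le> F l" using xf_class[OF l] r by simp
  show ?thesis
  proof (cases "L r b")
    case None
    then have "b \<in> leavers Q (M r) (L r)" using zt by (auto simp: leavers_def)
    then have "L (Suc r) b = Some r" using None by (simp add: lvs_Suc step_lv_def)
    then have "F b = r * Suc n + b" using r by (intro xf_left) auto
    then show ?thesis using Fl b by simp
  next
    case (Some j)
    then have "j < r" using lvs_char by blast
    then have "F b = j * Suc n + b" using Some r by (intro xf_left) auto
    moreover have "j * Suc n + b < Suc r * Suc n"
      using \<open>j < r\<close> b by (intro lin_lt) auto
    ultimately show ?thesis using Fl by simp
  qed
qed

lemma edges_rtrancl_le: "(a, b) \<in> (edges Q h lv)\<^sup>* \<Longrightarrow> a \<le> b"
  by (induction rule: rtrancl_induct) (auto simp: edges_def)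

lemma xxq_sym: "xxq Q h a b \<longleftrightarrow> xxq Q h b a"
  by (auto simp: xxq_def)

lemma vals_mod: assumes "i \<le> n" shows "vals n k lv i mod Suc n = i"
proof -
  have "(i + (case lv i of Some r \<Rightarrow> r | None \<Rightarrow> Suc k) * Suc n) mod Suc n = i mod Suc n"
    by (rule mod_mult_self1)
  also have "\<dots> = i" using assms by simp
  finally show ?thesis by (simp add: vals_def add.commute)
qed

lemma ord_class:
  assumes r: "r < k" and a: "L r a = None" and b: "L r b = None" and x: "xxq Q (M r) a b"
    and ab: "a < b"
  shows "F a < F b"
proof -
  have an: "a \<le> n" "b \<le> n" using xxq_valid[OF x] by auto
  show ?thesis
  proof (cases "L k b")
    case None
    then have "F b = Suc k * Suc n + b" by (simp add: xf_def vals_def)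
    then show ?thesis using xf_le[of a] ab by simp
  next
    case (Some jb)
    from lvs_char[OF Some] have jb: "jb < k" "L jb b = None" "L (Suc jb) b = Some jb" by auto
    have bl: "b \<in> leavers Q (M jb) (L jb)" using lvs_new[of n k Q jb b] jb by simp
    have rjb: "r \<le> jb"
    proof (rule ccontr)
      assume "\<not> r \<le> jb"
      then have "L r b = Some jb" using lvs_mono[OF jb(3)] by simp
      then show False using b by simp
    qed
    have Fb: "F b = jb * Suc n + b" using jb by (intro xf_left[of "Suc jb"]) auto
    show ?thesis
    proof (cases "L jb a")
      case (Some ja)
      then have "ja < jb" using lvs_char by blast
      then have "F a = ja * Suc n + a" using Some jb by (intro xf_left[of jb]) auto
      moreover have "ja * Suc n + a < jb * Suc n" using \<open>ja < jb\<close> an by (intro lin_lt) auto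
      ultimately show ?thesis using Fb by simp
    next
      case None
      have "take r (M jb) = M r" using rjb by (rule mh_take)
      then have e: "(a, b) \<in> edges Q (M jb) (L jb)"
        using None jb(2) ab x rjb unfolding edges_def by (auto intro!: exI[of _ r])
      obtain b' where b': "(b, b') \<in> (edges Q (M jb) (L jb))\<^sup>*" "L jb b' = None"
        "ztouch Q (M jb) b'" using bl by (auto simp: leavers_def)
      have "(a, b') \<in> (edges Q (M jb) (L jb))\<^sup>*" by (rule converse_rtrancl_into_rtrancl[OF e b'(1)])
      then have "a \<in> leavers Q (M jb) (L jb)" using None b' by (auto simp: leavers_def)
      then have "L (Suc jb) a = Some jb" using None by (simp add: lvs_Suc step_lv_def)
      then have "F a = jb * Suc n + a" using jb by (intro xf_left[of "Suc jb"]) auto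
      then show ?thesis using Fb ab by simp
    qed
  qed
qed

lemma xx_less:
  assumes r: "r < k" and x: "xxq Q (M r) a b"
  shows "F a < F b \<longleftrightarrow> vals n k (L r) a < vals n k (L r) b"
proof -
  have an: "a \<le> n" "b \<le> n" using xxq_valid[OF x] by auto
  show ?thesis
  proof (cases "L r a")
    case None note a = None
    show ?thesis
    proof (cases "L r b")
      case None
      have "F a < F b \<longleftrightarrow> a < b"
      proof (cases a b rule: linorder_cases)
        case less then show ?thesis using ord_class[OF r a None x] by simp
      next
        case equal then show ?thesis by simp
      next
        case greater
        then have "F b < F a" using ord_class[OF r None a] x by (simp add: xxq_sym)
        then show ?thesis using greater by simp
      qed
      then show ?thesis using a None by (simp add: vals_def)
    next
      case (Some jb)
      then have "jb < r" using lvs_char by blast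
      then have Fb: "F b = jb * Suc n + b" using Some r by (intro xf_left[of r]) auto
      have "jb * Suc n + b < r * Suc n" using \<open>jb < r\<close> an by (intro lin_lt) auto
      moreover have "r * Suc n + a \<le> F a" using xf_class[OF a] r by simp
      moreover have "jb * Suc n + b < Suc k * Suc n" using \<open>jb < r\<close> r an by (intro lin_lt) auto
      ultimately show ?thesis using Fb a Some by (simp add: vals_def)
    qed
  next
    case (Some ja) note a = Some
    then have "ja < r" using lvs_char by blast
    then have Fa: "F a = ja * Suc n + a" using Some r by (intro xf_left[of r]) auto
    show ?thesis
    proof (cases "L r b")
      case None
      have "ja * Suc n + a < r * Suc n" using \<open>ja < r\<close> an by (intro lin_lt) auto
      moreover have "r * Suc n + b \<le> F b" using xf_class[OF None] r by simp
      moreover have "ja * Suc n + a < Suc k * Suc n" using \<open>ja < r\<close> r an by (intro lin_lt) auto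
      ultimately show ?thesis using Fa a None by (simp add: vals_def)
    next
      case (Some jb)
      then have "jb < r" using lvs_char by blast
      then have Fb: "F b = jb * Suc n + b" using Some r by (intro xf_left[of r]) auto
      then show ?thesis using Fa a Some by (simp add: vals_def)
    qed
  qed
qed

lemma xx_eq:
  assumes x: "xxq Q (M r) a b"
  shows "F a = F b \<longleftrightarrow> vals n k (L r) a = vals n k (L r) b"
proof -
  have an: "a \<le> n" "b \<le> n" using xxq_valid[OF x] by auto
  have "F a = F b \<longleftrightarrow> a = b"
    using vals_mod[of a "L k"] vals_mod[of b "L k"] an unfolding xf_def by metis
  moreover have "vals n k (L r) a = vals n k (L r) b \<longleftrightarrow> a = b"
    using vals_mod[of a "L r"] vals_mod[of b "L r"] an by metis
  ultimately show ?thesis by simp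
qed

lemma round_agree:
  assumes r: "r < k" and q: "q \<in> Q (M r)" and l: "L (Suc r) l = None"
  shows "cmp_answer F l q = cmp_answer ((vals n k (L r))(0 := zval n k)) 0 q"
proof -
  let ?xr = "(vals n k (L r))(0 := zval n k)"
  obtain u w where uw: "q = (u, w)" by fastforce
  have uv: "u \<in> valid_items n" "w \<in> valid_items n" using q_valid q uw by auto
  show ?thesis
  proof (cases u)
    case Z note u = Z
    show ?thesis
    proof (cases w)
      case Z then show ?thesis using u uw by (simp add: cmp_answer_def)
    next
      case (X b)
      have zt: "ztouch Q (M r) b" using q uw u X by (simp add: ztouch_def)
      have b: "b \<in> {1..n}" using ztouch_valid[OF zt] .
      have "F b < F l" using z_lt[OF r zt l] .
      moreover have "vals n k (L r) b < zval n k" using b r by (intro vals_lt_zval) auto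
      ultimately show ?thesis unfolding uw u X using b
        by (intro cmp_answer_cong) auto
    qed
  next
    case (X a) note u = X
    show ?thesis
    proof (cases w)
      case Z
      have zt: "ztouch Q (M r) a" using q uw u Z by (simp add: ztouch_def)
      have a: "a \<in> {1..n}" using ztouch_valid[OF zt] .
      have "F a < F l" using z_lt[OF r zt l] .
      moreover have "vals n k (L r) a < zval n k" using a r by (intro vals_lt_zval) auto
      ultimately show ?thesis unfolding uw u Z using a
        by (intro cmp_answer_cong) auto
    next
      case (X b)
      have x: "xxq Q (M r) a b" using q uw u X by (simp add: xxq_def)
      have ab: "a \<in> {1..n}" "b \<in> {1..n}" using xxq_valid[OF x] by auto
      show ?thesis unfolding uw u X using ab xx_less[OF r x] xx_eq[OF x]
        by (intro cmp_answer_cong) auto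
    qed
  qed
qed

lemma leave_differs:
  assumes r: "r < k" and l0: "L r l = None" and l1: "L (Suc r) l \<noteq> None"
  shows "\<exists>q \<in> Q (M r). cmp_answer F l q \<noteq> cmp_answer ((vals n k (L r))(0 := zval n k)) 0 q"
proof -
  have ll: "L (Suc r) l = Some r" "l \<in> leavers Q (M r) (L r)" using lvs_new[OF l0 l1] by auto
  obtain b where b: "(l, b) \<in> (edges Q (M r) (L r))\<^sup>*" "L r b = None" "ztouch Q (M r) b"
    using ll(2) by (auto simp: leavers_def)
  have lb: "l \<le> b" using edges_rtrancl_le[OF b(1)] .
  have bn: "b \<in> {1..n}" using ztouch_valid[OF b(3)] .
  have "b \<in> leavers Q (M r) (L r)" using b(2,3) by (auto simp: leavers_def)
  then have "L (Suc r) b = Some r" using b(2) by (simp add: lvs_Suc step_lv_def)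
  then have Fb: "F b = r * Suc n + b" using r by (intro xf_left[of "Suc r"]) auto
  have Fl: "F l = r * Suc n + l" using ll(1) r by (intro xf_left[of "Suc r"]) auto
  have vz: "vals n k (L r) b < zval n k" using bn r by (intro vals_lt_zval) auto
  from b(3) show ?thesis unfolding ztouch_def
  proof
    assume "(Z, X b) \<in> Q (M r)"
    moreover have "cmp_answer F l (Z, X b) \<noteq> cmp_answer ((vals n k (L r))(0 := zval n k)) 0 (Z, X b)"
      using Fb Fl lb vz bn by (auto simp: cmp_answer_def Let_def)
    ultimately show ?thesis by blast
  next
    assume "(X b, Z) \<in> Q (M r)"
    moreover have "cmp_answer F l (X b, Z) \<noteq> cmp_answer ((vals n k (L r))(0 := zval n k)) 0 (X b, Z)"
      using Fb Fl lb vz bn by (auto simp: cmp_answer_def Let_def)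
    ultimately show ?thesis by blast
  qed
qed

lemma class_iff:
  "r \<le> k \<Longrightarrow> run_hist Q F l r = M r \<longleftrightarrow> L r l = None"
proof (induction r)
  case 0 then show ?case by simp
next
  case (Suc r)
  then have r: "r < k" by simp
  let ?h = "run_hist Q F l r"
  let ?fl = "\<lambda>q. if q \<in> Q ?h then Some (cmp_answer F l q) else None"
  let ?fm = "\<lambda>q. if q \<in> Q (M r) then Some (cmp_answer ((vals n k (L r))(0 := zval n k)) 0 q) else None"
  have eqs: "run_hist Q F l (Suc r) = ?h @ [?fl]" "M (Suc r) = M r @ [?fm]"
    by (simp_all add: Let_def mh_Suc step_hist_def)
  show ?case
  proof (cases "L (Suc r) l = None")
    case True
    then have "L r l = None" by (rule lvs_Suc_None)
    then have h: "?h = M r" using Suc r by simp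
    have "?fl = ?fm" unfolding h using round_agree[OF r _ True] by auto
    then show ?thesis using eqs h True by simp
  next
    case False
    show ?thesis
    proof (cases "L r l = None")
      case True
      then have h: "?h = M r" using Suc r by simp
      obtain q where q: "q \<in> Q (M r)"
        "cmp_answer F l q \<noteq> cmp_answer ((vals n k (L r))(0 := zval n k)) 0 q"
        using leave_differs[OF r True False] by blast
      have "?fl q \<noteq> ?fm q" using q h by simp
      then have "?fl \<noteq> ?fm" by metis
      then show ?thesis using eqs h False by simp
    next
      case c2: False
      then have "?h \<noteq> M r" using Suc r by simp
      then show ?thesis using eqs False by simp
    qed
  qed
qed

definition shape :: "nat \<Rightarrow> query \<Rightarrow> bool" where
  "shape l q \<longleftrightarrow> q = (Z, X l) \<or> q = (X l, Z) \<or> (\<exists>c. l < c \<and> (q = (X l, X c) \<or> q = (X c, X l)))"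

fun owner :: "query \<Rightarrow> nat" where
  "owner (Z, X i) = i"
| "owner (X i, Z) = i"
| "owner (X a, X b) = min a b"
| "owner (Z, Z) = 0"

lemma shape_owner: assumes "shape l q" shows "owner q = l"
proof -
  from assms consider "q = (Z, X l)" | "q = (X l, Z)" | c where "l < c" "q = (X l, X c)"
    | c where "l < c" "q = (X c, X l)" unfolding shape_def by blast
  then show ?thesis by cases simp_all
qed

lemma shape_unique: "shape l q \<Longrightarrow> shape l' q \<Longrightarrow> l = l'"
  using shape_owner by metis

lemma finite_Q: "finite (Q h)"
proof -
  have "finite (valid_queries n)" by (simp add: valid_queries_def valid_items_def)
  moreover have "Q h \<subseteq> valid_queries n" using valid by (simp add: valid_alg_def)
  ultimately show ?thesis by (rule finite_subset[rotated])
qed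

lemma leaver_witness:
  assumes "L (Suc r) l \<noteq> None"
  shows "\<exists>p \<in> (SIGMA j:{..<Suc r}. Q (M j)). shape l (snd p)"
proof -
  obtain j where j: "L (Suc r) l = Some j" using assms by auto
  from lvs_char[OF j] have j2: "j < Suc r" "L j l = None" "L (Suc j) l = Some j" by auto
  have "l \<in> leavers Q (M j) (L j)" using lvs_new[of n k Q j l] j2 by simp
  then obtain b where b: "(l, b) \<in> (edges Q (M j) (L j))\<^sup>*" "ztouch Q (M j) b"
    by (auto simp: leavers_def)
  show ?thesis
  proof (cases "l = b")
    case True
    then have "(Z, X l) \<in> Q (M j) \<or> (X l, Z) \<in> Q (M j)" using b(2) by (simp add: ztouch_def)
    then show ?thesis using j2(1) by (auto simp: shape_def)
  next
    case False
    obtain c where c: "(l, c) \<in> edges Q (M j) (L j)"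
      using b(1) False by (cases rule: converse_rtranclE) auto
    then obtain j' where j': "j' \<le> j" "xxq Q (take j' (M j)) l c" "l < c"
      by (auto simp: edges_def)
    have "take j' (M j) = M j'" using j'(1) by (rule mh_take)
    then have "(X l, X c) \<in> Q (M j') \<or> (X c, X l) \<in> Q (M j')" using j'(2) by (simp add: xxq_def)
    moreover have "j' < Suc r" using j'(1) j2(1) by simp
    ultimately show ?thesis using j'(3) by (auto simp: shape_def)
  qed
qed

lemma leavers_count:
  "card {l \<in> {1..n}. L (Suc r) l \<noteq> None} \<le> (\<Sum>j<Suc r. card (Q (M j)))"
proof -
  let ?A = "{l \<in> {1..n}. L (Suc r) l \<noteq> None}"
  let ?B = "SIGMA j:{..<Suc r}. Q (M j)"
  define f where "f l = (SOME p. p \<in> ?B \<and> shape l (snd p))" for l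
  have ex: "\<exists>p. p \<in> ?B \<and> shape l (snd p)" if "l \<in> ?A" for l
    using leaver_witness[of r l] that by blast
  have fB: "f l \<in> ?B \<and> shape l (snd (f l))" if "l \<in> ?A" for l
    unfolding f_def by (rule someI_ex[OF ex[OF that]])
  have inj: "inj_on f ?A"
  proof (rule inj_onI)
    fix l l' assume a: "l \<in> ?A" "l' \<in> ?A" "f l = f l'"
    have "shape l (snd (f l))" using fB[OF a(1)] by blast
    moreover have "shape l' (snd (f l))" using fB[OF a(2)] a(3) by simp
    ultimately show "l = l'" by (rule shape_unique)
  qed
  have sub: "f ` ?A \<subseteq> ?B" using fB by blast
  have fin: "finite ?B" by (rule finite_SigmaI) (simp_all add: finite_Q)
  have "card ?A \<le> card ?B" by (rule card_inj_on_le[OF inj sub fin])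
  also have "card ?B = (\<Sum>j<Suc r. card (Q (M j)))"
    by (rule card_SigmaI) (simp_all add: finite_Q)
  finally show ?thesis .
qed

end



lemma tele_d: "(\<Sum>r<K. c r - (N r - N (Suc r))) = (\<Sum>r<K. c r) - (N 0 - N K :: real)"
proof -
  have "(\<Sum>r<K. c r - (N r - N (Suc r))) = (\<Sum>r<K. c r) - (\<Sum>r<K. N r - N (Suc r))"
    by (rule sum_subtractf)
  also have "(\<Sum>r<K. N r - N (Suc r)) = N 0 - N K" by (rule sum_lessThan_telescope')
  finally show ?thesis .
qed

lemma abel_lemma:
  fixes N c :: "nat \<Rightarrow> real"
  assumes mono: "\<And>r. r < k \<Longrightarrow> N (Suc r) \<le> N r"
    and pref: "\<And>r. r < k \<Longrightarrow> N 0 - N (Suc r) \<le> (\<Sum>j<Suc r. c j)"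
  shows "K \<le> k \<Longrightarrow> (\<Sum>r<K. (c r - (N r - N (Suc r))) * N r) \<ge> (\<Sum>r<K. c r - (N r - N (Suc r))) * N K"
proof (induction K)
  case 0 then show ?case by simp
next
  case (Suc K)
  let ?d = "\<lambda>r. c r - (N r - N (Suc r))"
  have tel: "(\<Sum>r<Suc K. ?d r) = (\<Sum>r<Suc K. c r) - (N 0 - N (Suc K))"
    by (rule tele_d)
  have D0: "(\<Sum>r<Suc K. ?d r) \<ge> 0" using pref[of K] Suc.prems tel by simp
  have "(\<Sum>r<Suc K. ?d r * N r) = (\<Sum>r<K. ?d r * N r) + ?d K * N K" by simp
  also have "\<dots> \<ge> (\<Sum>r<K. ?d r) * N K + ?d K * N K" using Suc by simp
  finally have "(\<Sum>r<Suc K. ?d r * N r) \<ge> (\<Sum>r<Suc K. ?d r) * N K" by (simp add: algebra_simps)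
  moreover have "(\<Sum>r<Suc K. ?d r) * N (Suc K) \<le> (\<Sum>r<Suc K. ?d r) * N K"
    using D0 mono[of K] Suc.prems by (intro mult_left_mono) auto
  ultimately show ?case by linarith
qed

lemma lb_real:
  fixes N c :: "nat \<Rightarrow> real" and n p :: real and k :: nat
  assumes k: "k \<ge> 1" and n: "n \<ge> 1" and N0: "N 0 = n"
    and mono: "\<And>r. r < k \<Longrightarrow> N (Suc r) \<le> N r"
    and Npos: "\<And>r. 0 \<le> N r"
    and pref: "\<And>r. r < k \<Longrightarrow> N 0 - N (Suc r) \<le> (\<Sum>j<Suc r. c j)"
    and p0: "0 \<le> p" and p1: "p \<le> 1"
    and succ: "p * n \<le> n - N k + 1"
  shows "(\<Sum>r<k. c r * N r) \<ge> n * (n * p * (1 - (real k - 1) / (2 * real k) * p)) - n"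
proof -
  define s where "s r = N r - N (Suc r)" for r
  have A: "(\<Sum>r<k. (c r - s r) * N r) \<ge> (\<Sum>r<k. c r - s r) * N k"
    using abel_lemma[OF mono pref, of k] by (simp add: s_def)
  have "(\<Sum>r<k. c r - s r) = (\<Sum>r<Suc (k - 1). c r - s r)" using k by simp
  also have "\<dots> = (\<Sum>r<Suc (k-1). c r) - (N 0 - N (Suc (k - 1)))"
    unfolding s_def by (rule tele_d)
  also have "\<dots> \<ge> 0" using pref[of "k - 1"] k by simp
  finally have "(\<Sum>r<k. c r - s r) * N k \<ge> 0" using Npos by simp
  with A have "(\<Sum>r<k. (c r - s r) * N r) \<ge> 0" by linarith
  then have B: "(\<Sum>r<k. c r * N r) \<ge> (\<Sum>r<k. s r * N r)"
    by (simp add: algebra_simps sum_subtractf)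
  have "(\<Sum>r<k. s r * N r) = (\<Sum>r<k. (N r * N r - N (Suc r) * N (Suc r)) / 2 + s r * s r / 2)"
    by (rule sum.cong) (auto simp: s_def field_simps)
  also have "\<dots> = (N 0 * N 0 - N k * N k) / 2 + (\<Sum>r<k. s r * s r) / 2"
    using sum_lessThan_telescope'[of "\<lambda>r. N r * N r" k]
    by (simp add: sum.distrib sum_divide_distrib[symmetric])
  finally have C: "(\<Sum>r<k. s r * N r) = (N 0 * N 0 - N k * N k) / 2 + (\<Sum>r<k. s r * s r) / 2" .
  define S where "S = n - N k"
  have sumS: "(\<Sum>r<k. s r) = S" unfolding s_def S_def using sum_lessThan_telescope'[of N k] N0 by simp
  define a where "a = S / real k"
  have "0 \<le> (\<Sum>r<k. (s r - a) * (s r - a))" by (intro sum_nonneg) simp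
  also have "\<dots> = (\<Sum>r<k. s r * s r) - 2 * a * (\<Sum>r<k. s r) + real k * a * a"
    by (simp add: algebra_simps sum.distrib sum_subtractf sum_distrib_left)
  also have "\<dots> = (\<Sum>r<k. s r * s r) - S * S / real k"
    using k by (simp add: sumS a_def field_simps power2_eq_square)
  finally have D: "(\<Sum>r<k. s r * s r) \<ge> S * S / real k" by simp
  define cc where "cc = (real k - 1) / (2 * real k)"
  have cc0: "0 \<le> cc" "cc \<le> 1/2" using k by (auto simp: cc_def field_simps)
  have Nk: "N k \<le> n"
  proof -
    have "N 0 - N (Suc (k - 1)) \<le> N 0 - N (Suc (k-1))" by simp
    have "\<forall>r\<le>k. N r \<le> N 0"
    proof (intro allI impI)
      fix r show "r \<le> k \<Longrightarrow> N r \<le> N 0"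
      proof (induction r)
        case 0 then show ?case by simp
      next
        case (Suc r)
        then have "N (Suc r) \<le> N r" using mono[of r] by simp
        then show ?case using Suc by simp
      qed
    qed
    then show ?thesis using N0 by simp
  qed
  have S0: "0 \<le> S" "S \<le> n" using Nk Npos[of k] by (auto simp: S_def)
  have fS: "(\<Sum>r<k. c r * N r) \<ge> n * S - cc * S * S"
  proof -
    have "(\<Sum>r<k. c r * N r) \<ge> (n * n - N k * N k) / 2 + S * S / real k / 2"
      using B C D N0 by simp
    moreover have "(n * n - N k * N k) / 2 + S * S / real k / 2 = n * S - cc * S * S"
      using k by (simp add: S_def cc_def field_simps)
    ultimately show ?thesis by simp
  qed
  define P where "P = n * p"
  have goal_eq: "n * (n * p * (1 - (real k - 1) / (2 * real k) * p)) - n = n * P - cc * P * P - n"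
    by (simp add: P_def cc_def algebra_simps)
  show ?thesis
  proof (cases "P \<le> 1")
    case True
    have "n * P - cc * P * P - n \<le> 0"
    proof -
      have "cc * P * P \<ge> 0" using cc0 P_def p0 n by simp
      moreover have "n * P \<le> n * 1" using True n by (intro mult_left_mono) auto
      ultimately show ?thesis by simp
    qed
    moreover have "n * S - cc * S * S \<ge> 0"
    proof -
      have "cc * S \<le> 1 * n" using cc0 S0 by (intro mult_mono) auto
      then have "cc * S * S \<le> n * S" using S0 by (simp add: mult_right_mono)
      then show ?thesis by simp
    qed
    ultimately show ?thesis using fS goal_eq by linarith
  next
    case False
    define T where "T = P - 1"
    have T0: "0 \<le> T" "T \<le> S" using False succ by (auto simp: T_def S_def P_def mult.commute)
    have "n * S - cc * S * S - (n * T - cc * T * T) = (S - T) * (n - cc * (S + T))"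
      by (simp add: algebra_simps)
    moreover have "cc * (S + T) \<le> n"
    proof -
      have "cc * (S + T) \<le> (1/2) * (2 * n)" using cc0 S0 T0 by (intro mult_mono) auto
      then show ?thesis by simp
    qed
    ultimately have "n * S - cc * S * S \<ge> n * T - cc * T * T"
      using T0 by (metis diff_ge_0_iff_ge mult_nonneg_nonneg)
    moreover have "n * T - cc * T * T \<ge> n * P - cc * P * P - n"
    proof -
      have "n * T - cc * T * T - (n * P - cc * P * P - n) = cc * (2 * P - 1)"
        by (simp add: T_def algebra_simps)
      moreover have "cc * (2 * P - 1) \<ge> 0" using cc0 False by simp
      ultimately show ?thesis by linarith
    qed
    ultimately show ?thesis using fS goal_eq by linarith
  qed
qed

lemma card_split_None:
  "card {l \<in> {1..n}. lv l = None} + card {l \<in> {1..n}. lv l \<noteq> None} = n"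
proof -
  have "card {l \<in> {1..n}. lv l = None} + card {l \<in> {1..n}. lv l \<noteq> None}
      = card ({l \<in> {1..n}. lv l = None} \<union> {l \<in> {1..n}. lv l \<noteq> None})"
    by (rule card_Un_disjoint[symmetric]) auto
  also have "{l \<in> {1..n}. lv l = None} \<union> {l \<in> {1..n}. lv l \<noteq> None} = {1..n}" by auto
  finally show ?thesis by simp
qed

lemma lower_part:
  fixes n k :: nat and p :: real
  assumes n: "n \<ge> 1" and k: "1 \<le> k" and p0: "0 \<le> p" and p1: "p \<le> 1"
  shows "\<forall>Q Out. valid_alg n Q \<and> (\<forall>x. inj_on x {1..n} \<longrightarrow> succ_prob n k Q Out x \<ge> p) \<longrightarrow>
            (\<exists>x. inj_on x {1..n} \<and>
                 exp_queries n k Q x \<ge> real n * p * (1 - (real k - 1) / (2 * real k) * p) - 1)"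
proof (intro allI impI)
  fix Q :: "history \<Rightarrow> query set" and Out :: "history \<Rightarrow> nat"
  assume H: "valid_alg n Q \<and> (\<forall>x. inj_on x {1..n} \<longrightarrow> succ_prob n k Q Out x \<ge> p)"
  then have valid: "valid_alg n Q" by simp
  let ?F = "xf n k Q"
  let ?L = "lvs n k Q"
  let ?M = "mh n k Q"
  have inj: "inj_on ?F {1..n}"
  proof (rule inj_onI)
    fix a b assume "a \<in> {1..n}" "b \<in> {1..n}" "?F a = ?F b"
    then show "a = b" unfolding xf_def using vals_mod[OF valid, where i=a and lv="lvs n k Q k" and k=k] vals_mod[OF valid, where i=b and lv="lvs n k Q k" and k=k]
      by (metis atLeastAtMost_iff)
  qed
  define NN where "NN r = card {l \<in> {1..n}. ?L r l = None}" for r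
  define N where "N r = real (NN r)" for r
  define c where "c r = real (card (Q (?M r)))" for r
  have "{l \<in> {1..n}. ?L 0 l = None} = {1..n}" by auto
  then have N0: "N 0 = real n" by (simp add: N_def NN_def)
  have mono: "N (Suc r) \<le> N r" if "r < k" for r
  proof -
    have "NN (Suc r) \<le> NN r" unfolding NN_def
      by (rule card_mono) (auto intro: lvs_Suc_None)
    then show ?thesis by (simp add: N_def)
  qed
  have Npos: "0 \<le> N r" for r by (simp add: N_def)
  have pref: "N 0 - N (Suc r) \<le> (\<Sum>j<Suc r. c j)" if "r < k" for r
  proof -
    have "card {l \<in> {1..n}. ?L (Suc r) l \<noteq> None} \<le> (\<Sum>j<Suc r. card (Q (?M j)))"
      by (rule leavers_count[OF valid])
    moreover have "NN (Suc r) + card {l \<in> {1..n}. ?L (Suc r) l \<noteq> None} = n"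
      unfolding NN_def by (rule card_split_None)
    ultimately have "n \<le> NN (Suc r) + (\<Sum>j<Suc r. card (Q (?M j)))" by linarith
    then have "real n \<le> real (NN (Suc r) + (\<Sum>j<Suc r. card (Q (?M j))))" by (rule of_nat_mono)
    then have "real n \<le> N (Suc r) + (\<Sum>j<Suc r. c j)" by (simp add: N_def c_def)
    then show ?thesis using N0 by linarith
  qed
  have succ: "p * real n \<le> real n - N k + 1"
  proof -
    have sp: "p \<le> succ_prob n k Q Out ?F" using H inj by blast
    let ?S = "{l \<in> {1..n}. Out (run_hist Q ?F l k) = l}"
    have "?S \<subseteq> {l \<in> {1..n}. ?L k l \<noteq> None} \<union> {Out (?M k)}"
    proof
      fix l assume l: "l \<in> ?S"
      show "l \<in> {l \<in> {1..n}. ?L k l \<noteq> None} \<union> {Out (?M k)}"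
      proof (cases "?L k l = None")
        case True
        then have "run_hist Q ?F l k = ?M k" using class_iff[OF valid, where k=k and r=k and l=l] by simp
        then show ?thesis using l by simp
      next
        case False then show ?thesis using l by simp
      qed
    qed
    then have "card ?S \<le> card ({l \<in> {1..n}. ?L k l \<noteq> None} \<union> {Out (?M k)})"
      by (rule card_mono[rotated]) auto
    also have "\<dots> \<le> card {l \<in> {1..n}. ?L k l \<noteq> None} + card {Out (?M k)}"
      by (rule card_Un_le)
    finally have "card ?S \<le> card {l \<in> {1..n}. ?L k l \<noteq> None} + 1" by simp
    moreover have "NN k + card {l \<in> {1..n}. ?L k l \<noteq> None} = n"
      unfolding NN_def by (rule card_split_None)
    ultimately have "card ?S + NN k \<le> n + 1" by linarith
    then have "real (card ?S + NN k) \<le> real (n + 1)" by (rule of_nat_mono)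
    then have cS: "real (card ?S) \<le> real n - N k + 1" by (simp add: N_def)
    have "p * real n \<le> succ_prob n k Q Out ?F * real n" using sp by (simp add: mult_right_mono)
    also have "\<dots> = real (card ?S)" using n by (simp add: succ_prob_def)
    finally show ?thesis using cS by simp
  qed
  have LB: "(\<Sum>r<k. c r * N r) \<ge> real n * (real n * p * (1 - (real k - 1) / (2 * real k) * p)) - real n"
    by (rule lb_real[OF k _ N0 mono Npos pref p0 p1 succ]) (use n in auto)
  have numge: "real (num_queries Q ?F l k) \<ge> (\<Sum>r<k. if ?L r l = None then c r else 0)"
    if l: "l \<in> {1..n}" for l
  proof -
    have "(\<Sum>r<k. if ?L r l = None then c r else 0) \<le> (\<Sum>r<k. real (card (Q (run_hist Q ?F l r))))"
    proof (rule sum_mono)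
      fix r assume "r \<in> {..<k}"
      then show "(if ?L r l = None then c r else 0) \<le> real (card (Q (run_hist Q ?F l r)))"
        using class_iff[OF valid, where k=k and r=r and l=l] by (auto simp: c_def)
    qed
    then show ?thesis by (simp add: num_queries_def)
  qed
  have "(\<Sum>r<k. c r * N r) = (\<Sum>r<k. \<Sum>l\<in>{1..n}. if ?L r l = None then c r else 0)"
  proof (rule sum.cong[OF refl])
    fix r
    have "(\<Sum>l\<in>{1..n}. if ?L r l = None then c r else 0) = (\<Sum>l\<in>{l \<in> {1..n}. ?L r l = None}. c r)"
      by (rule sum.inter_filter[symmetric]) simp
    also have "\<dots> = c r * N r" by (simp add: N_def NN_def)
    finally show "c r * N r = (\<Sum>l\<in>{1..n}. if ?L r l = None then c r else 0)" by simp
  qed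
  also have "\<dots> = (\<Sum>l\<in>{1..n}. \<Sum>r<k. if ?L r l = None then c r else 0)"
    by (rule sum.swap)
  also have "\<dots> \<le> (\<Sum>l\<in>{1..n}. real (num_queries Q ?F l k))"
    by (rule sum_mono) (rule numge, simp)
  finally have tot: "(\<Sum>r<k. c r * N r) \<le> (\<Sum>l\<in>{1..n}. real (num_queries Q ?F l k))" .
  have "real n * p * (1 - (real k - 1) / (2 * real k) * p) - 1
      = (real n * (real n * p * (1 - (real k - 1) / (2 * real k) * p)) - real n) / real n"
    using n by (simp add: field_simps)
  also have "\<dots> \<le> (\<Sum>l\<in>{1..n}. real (num_queries Q ?F l k)) / real n"
    using LB tot n by (intro divide_right_mono) auto
  also have "\<dots> = exp_queries n k Q ?F" by (simp add: exp_queries_def)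
  finally show "\<exists>x. inj_on x {1..n} \<and>
      exp_queries n k Q x \<ge> real n * p * (1 - (real k - 1) / (2 * real k) * p) - 1"
    using inj by blast
qed


theorem theorem2:
  fixes n k :: nat and p :: real
  assumes "n \<ge> 1" and "1 \<le> k" and "k \<le> n" and "0 \<le> p" and "p \<le> 1"
  shows "(\<forall>Q Out. valid_alg n Q \<and> (\<forall>x. inj_on x {1..n} \<longrightarrow> succ_prob n k Q Out x \<ge> p) \<longrightarrow>
            (\<exists>x. inj_on x {1..n} \<and>
                 exp_queries n k Q x \<ge> real n * p * (1 - (real k - 1) / (2 * real k) * p) - 1))
       \<and> (\<exists>Q Out. valid_alg n Q \<and>
            (\<forall>x. inj_on x {1..n} \<longrightarrow>
                 succ_prob n k Q Out x \<ge> p \<and>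
                 exp_queries n k Q x \<le> real n * p * (1 - (real k - 1) / (2 * real k) * p) + 1))"
  using lower_part[OF assms(1,2,4,5)] upper_part[OF assms(1,2,4,5)] by blast

end
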